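(* Let $r\ge2$, $f:\{\pm1\}^r\to\{0,1\}$, $\alpha>0$, $d=r\alpha$, and $\alpha'=\lceil (d+\sqrt d\log d)/r\rceil$. Let $\mathcal I\sim\mathrm{CSP}_f(\alpha)$ on $n$ variables and run the removal phase. Then there is $c>0$ such that, with probability tending to $1$ as $n\to\infty$, the number of removed clauses is at most $n\cdot O_d(d^{-c\log d})$.
   Context: Random CSP $\mathrm{CSP}_f(\alpha)$: on variables $x_1,\dots,x_n$, with $m=\alpha n$ clauses; for each clause independently draw indices $i_1,\dots,i_r$ uniformly i.i.d. from $[n]$ and signs uniformly i.i.d. from $\{\pm1\}$, the clause being $f(\epsilon_1x_{i_1},\dots,\epsilon_rx_{i_r})$. For a variable $v$ and $\iota\in[r]$, $\deg(v,\iota)$ is the number of clauses whose $\iota$-th index is $v$. Removal phase: while there is a pair $(v,\iota)$ with $\deg(v,\iota)>\alpha'$, pick such a pair and delete an arbitrary clause in which $v$ appears at index $\iota$. $O_d(g(d))$ denotes a quantity bounded by $C\,g(d)$ with $C$ independent of $d$ and $n$. *)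

theory Defs
  imports "HOL-Probability.Probability"
begin

text \<open>A clause is a list of r literals (variable index in {0..<n}, sign; True = +1, False = -1).
  An instance is a list of m clauses; the predicate f is common to all clauses and
  plays no role in the removal phase.\<close>

type_synonym clause = "(nat \<times> bool) list"

definition csp_instances :: "nat \<Rightarrow> nat \<Rightarrow> nat \<Rightarrow> clause list set" where
  "csp_instances r n m =
     {cs. length cs = m \<and> (\<forall>c\<in>set cs. length c = r \<and> (\<forall>p\<in>set c. fst p < n))}"

text \<open>Uniform distribution over instances = i.i.d. uniform indices and signs; m = floor(alpha n).\<close>
definition random_csp :: "nat \<Rightarrow> nat \<Rightarrow> real \<Rightarrow> clause list pmf" where
  "random_csp r n \<alpha> = pmf_of_set (csp_instances r n (nat \<lfloor>\<alpha> * real n\<rfloor>))"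

definition deg :: "clause list \<Rightarrow> nat set \<Rightarrow> nat \<Rightarrow> nat \<Rightarrow> nat" where
  "deg cs S v \<iota> = card {j\<in>S. fst (cs ! j ! \<iota>) = v}"

definition removal_step :: "nat \<Rightarrow> int \<Rightarrow> clause list \<Rightarrow> nat set \<Rightarrow> nat set \<Rightarrow> bool" where
  "removal_step r a' cs S S' \<longleftrightarrow>
     (\<exists>j \<iota>. j \<in> S \<and> \<iota> < r \<and> int (deg cs S (fst (cs ! j ! \<iota>)) \<iota>) > a' \<and> S' = S - {j})"

definition removal_terminal :: "nat \<Rightarrow> int \<Rightarrow> clause list \<Rightarrow> nat set \<Rightarrow> bool" where
  "removal_terminal r a' cs S \<longleftrightarrow> (\<forall>v \<iota>. \<iota> < r \<longrightarrow> int (deg cs S v \<iota>) \<le> a')"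

definition removal_outcome :: "nat \<Rightarrow> int \<Rightarrow> clause list \<Rightarrow> nat set \<Rightarrow> bool" where
  "removal_outcome r a' cs S \<longleftrightarrow>
     (removal_step r a' cs)\<^sup>*\<^sup>* {0..<length cs} S \<and> removal_terminal r a' cs S"

definition alpha' :: "nat \<Rightarrow> real \<Rightarrow> int" where
  "alpha' r \<alpha> = (let d = real r * \<alpha> in \<lceil>(d + sqrt d * ln d) / real r\<rceil>)"

end

theory Submission
  imports Defs
begin


definition lst :: "'a set \<Rightarrow> nat \<Rightarrow> 'a list set" where
  "lst K m = {xs. set xs \<subseteq> K \<and> length xs = m}"

lemma lst_finite: "finite K \<Longrightarrow> finite (lst K m)"
  unfolding lst_def by (rule finite_lists_length_eq)

lemma lst_card: "finite K \<Longrightarrow> card (lst K m) = card K ^ m"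
  unfolding lst_def by (rule card_lists_length_eq)

lemma lst_0: "lst K 0 = {[]}" unfolding lst_def by auto

lemma lst_Suc: "lst K (Suc m) = (\<lambda>(a,xs). a#xs) ` (K \<times> lst K m)"
proof
  show "lst K (Suc m) \<subseteq> (\<lambda>(a,xs). a#xs) ` (K \<times> lst K m)"
  proof
    fix ys assume "ys \<in> lst K (Suc m)"
    then obtain a xs where "ys = a#xs" "a \<in> K" "xs \<in> lst K m"
      unfolding lst_def by (cases ys) auto
    then show "ys \<in> (\<lambda>(a,xs). a#xs) ` (K \<times> lst K m)" by force
  qed
qed (auto simp: lst_def)

lemma sum_lst_Suc:
  assumes "finite K"
  shows "(\<Sum>ys\<in>lst K (Suc m). G ys) = (\<Sum>a\<in>K. \<Sum>xs\<in>lst K m. G (a#xs))"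
proof -
  have inj: "inj_on (\<lambda>(a,xs). a#xs) (K \<times> lst K m)" by (auto simp: inj_on_def)
  have "(\<Sum>ys\<in>lst K (Suc m). G ys) = (\<Sum>p\<in>K \<times> lst K m. G ((\<lambda>(a,xs). a#xs) p))"
    unfolding lst_Suc by (rule sum.reindex[OF inj, unfolded comp_def])
  also have "\<dots> = (\<Sum>a\<in>K. \<Sum>xs\<in>lst K m. G (a#xs))"
    by (simp add: sum.cartesian_product split_def)
  finally show ?thesis .
qed

lemma sum_lst_prod:
  fixes g :: "'a \<Rightarrow> real"
  assumes "finite K"
  shows "(\<Sum>xs\<in>lst K m. prod_list (map g xs)) = (sum g K) ^ m"
proof (induction m)
  case 0 then show ?case by (simp add: lst_0)
next
  case (Suc m)
  show ?case using Suc by (simp add: sum_lst_Suc[OF assms] sum_distrib_left[symmetric] sum_distrib_right[symmetric])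
qed

lemma sum_lst_nth:
  fixes g :: "'a \<Rightarrow> real"
  assumes "finite K" "i < m"
  shows "(\<Sum>xs\<in>lst K m. g (xs ! i)) = real (card K) ^ (m - 1) * sum g K"
  using assms(2)
proof (induction m arbitrary: i)
  case 0 then show ?case by simp
next
  case (Suc m)
  show ?case
  proof (cases i)
    case 0
    then show ?thesis by (simp add: sum_lst_Suc[OF assms(1)] lst_card[OF assms(1)] sum_distrib_right mult.commute)
  next
    case (Suc i')
    with Suc.prems have "i' < m" by simp
    then have "Suc (m - 1) = m" by simp
    then have pw: "real (card K) * real (card K) ^ (m - 1) = real (card K) ^ m"
      by (metis power_Suc)
    show ?thesis using Suc.IH[OF \<open>i' < m\<close>] \<open>i = Suc i'\<close> pw
      by (simp add: sum_lst_Suc[OF assms(1)] mult.assoc[symmetric])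
  qed
qed

lemma mean_sq:
  fixes g :: "'b \<Rightarrow> real" and \<mu> \<kappa> :: real
  assumes "finite A" "A \<noteq> {}"
  defines "\<mu> \<equiv> sum g A / card A"
  shows "(\<Sum>x\<in>A. (g x - \<kappa>)^2) = (\<Sum>x\<in>A. (g x - \<mu>)^2) + card A * (\<mu> - \<kappa>)^2"
proof -
  have c: "card A > 0" using assms by auto
  have s0: "(\<Sum>x\<in>A. g x - \<mu>) = 0" using c by (simp add: sum_subtractf \<mu>_def)
  have "(\<Sum>x\<in>A. (g x - \<kappa>)^2) = (\<Sum>x\<in>A. (g x - \<mu>)^2 + 2 * (\<mu> - \<kappa>) * (g x - \<mu>) + (\<mu> - \<kappa>)^2)"
    by (rule sum.cong) (auto simp: power2_eq_square algebra_simps)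
  also have "\<dots> = (\<Sum>x\<in>A. (g x - \<mu>)^2) + 2 * (\<mu> - \<kappa>) * (\<Sum>x\<in>A. g x - \<mu>) + card A * (\<mu> - \<kappa>)^2"
    by (simp add: sum.distrib sum_distrib_left)
  finally show ?thesis using s0 by simp
qed

lemma var_bound:
  fixes F :: "'a list \<Rightarrow> real" and c :: real
  assumes K: "finite K" "K \<noteq> {}"
  and bd: "\<And>xs ys a b. set xs \<subseteq> K \<Longrightarrow> set ys \<subseteq> K \<Longrightarrow> a \<in> K \<Longrightarrow> b \<in> K \<Longrightarrow>
             length xs + length ys + 1 = m \<Longrightarrow> \<bar>F (xs@a#ys) - F (xs@b#ys)\<bar> \<le> c"
  shows "(\<Sum>xs\<in>lst K m. (F xs - (\<Sum>ys\<in>lst K m. F ys) / card (lst K m))^2) \<le> card (lst K m) * m * c^2"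
  using bd
proof (induction m arbitrary: F)
  case 0 then show ?case by (simp add: lst_0)
next
  case (Suc m)
  define N where "N = card (lst K m)"
  have Npos: "N > 0" unfolding N_def using K by (simp add: lst_card card_gt_0_iff)
  have Kpos: "card K > 0" using K by auto
  define h where "h a = (\<Sum>xs\<in>lst K m. F (a#xs)) / N" for a
  define \<mu> where "\<mu> = (\<Sum>ys\<in>lst K (Suc m). F ys) / card (lst K (Suc m))"
  have cS: "card (lst K (Suc m)) = card K * N" unfolding N_def using K by (simp add: lst_card)
  have \<mu>h: "\<mu> = sum h K / card K"
    unfolding \<mu>_def h_def cS using Npos
    by (simp add: sum_lst_Suc[OF K(1)] sum_divide_distrib[symmetric] field_simps)
  have IH: "(\<Sum>xs\<in>lst K m. (F (a#xs) - h a)^2) \<le> N * m * c^2" if "a \<in> K" for a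
    unfolding h_def N_def
  proof (rule Suc.IH)
    fix xs ys b1 b2 assume "set xs \<subseteq> K" "set ys \<subseteq> K" "b1 \<in> K" "b2 \<in> K" "length xs + length ys + 1 = m"
    then show "\<bar>F (a # xs @ b1 # ys) - F (a # xs @ b2 # ys)\<bar> \<le> c"
      using Suc.prems[of "a#xs" ys b1 b2] that by simp
  qed
  have hdiff: "(h a - h a0)^2 \<le> c^2" if "a \<in> K" "a0 \<in> K" for a a0
  proof -
    have "\<bar>(\<Sum>xs\<in>lst K m. F (a#xs) - F (a0#xs))\<bar> \<le> (\<Sum>xs\<in>lst K m. \<bar>F (a#xs) - F (a0#xs)\<bar>)"
      by (rule sum_abs)
    also have "\<dots> \<le> (\<Sum>xs\<in>lst K m. c)"
      by (rule sum_mono) (use Suc.prems[of "[]" _ a a0] that in \<open>auto simp: lst_def\<close>)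
    also have "\<dots> = N * c" unfolding N_def by simp
    finally have s1: "\<bar>(\<Sum>xs\<in>lst K m. F (a#xs) - F (a0#xs))\<bar> \<le> N * c" .
    have eq: "h a - h a0 = (\<Sum>xs\<in>lst K m. F (a#xs) - F (a0#xs)) / N"
      unfolding h_def by (simp add: sum_subtractf diff_divide_distrib)
    have "\<bar>h a - h a0\<bar> = \<bar>(\<Sum>xs\<in>lst K m. F (a#xs) - F (a0#xs))\<bar> / N"
      unfolding eq by (simp add: abs_divide)
    also have "\<dots> \<le> c" using s1 Npos by (simp add: divide_le_eq mult.commute)
    finally have "\<bar>h a - h a0\<bar> \<le> c" .
    then show ?thesis using power_mono[OF _ abs_ge_zero, of _ c 2] by simp
  qed
  obtain a0 where a0: "a0 \<in> K" using K by auto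
  have "(\<Sum>ys\<in>lst K (Suc m). (F ys - \<mu>)^2) = (\<Sum>a\<in>K. \<Sum>xs\<in>lst K m. (F (a#xs) - \<mu>)^2)"
    by (rule sum_lst_Suc[OF K(1)])
  also have "\<dots> = (\<Sum>a\<in>K. (\<Sum>xs\<in>lst K m. (F (a#xs) - h a)^2) + N * (h a - \<mu>)^2)"
  proof (rule sum.cong[OF refl])
    fix a assume "a \<in> K"
    have "lst K m \<noteq> {}" using Npos unfolding N_def by auto
    then show "(\<Sum>xs\<in>lst K m. (F (a#xs) - \<mu>)^2) = (\<Sum>xs\<in>lst K m. (F (a#xs) - h a)^2) + N * (h a - \<mu>)^2"
      using mean_sq[OF lst_finite[OF K(1)], of m "\<lambda>xs. F (a#xs)" \<mu>] unfolding h_def N_def by simp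
  qed
  also have "\<dots> = (\<Sum>a\<in>K. \<Sum>xs\<in>lst K m. (F (a#xs) - h a)^2) + N * (\<Sum>a\<in>K. (h a - \<mu>)^2)"
    by (simp add: sum.distrib sum_distrib_left)
  also have "\<dots> \<le> (\<Sum>a\<in>K. N * m * c^2) + N * (\<Sum>a\<in>K. (h a - h a0)^2)"
  proof (rule add_mono)
    show "(\<Sum>a\<in>K. \<Sum>xs\<in>lst K m. (F (a#xs) - h a)^2) \<le> (\<Sum>a\<in>K. N * m * c^2)"
      by (rule sum_mono) (rule IH)
    have "(\<Sum>a\<in>K. (h a - \<mu>)^2) \<le> (\<Sum>a\<in>K. (h a - h a0)^2)"
      using mean_sq[OF K, of h "h a0"] \<mu>h by simp
    then show "N * (\<Sum>a\<in>K. (h a - \<mu>)^2) \<le> N * (\<Sum>a\<in>K. (h a - h a0)^2)"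
      by (simp add: mult_left_mono)
  qed
  also have "\<dots> \<le> (\<Sum>a\<in>K. N * m * c^2) + N * (\<Sum>a\<in>K. c^2)"
  proof (rule add_left_mono, rule mult_left_mono)
    show "(\<Sum>a\<in>K. (h a - h a0)^2) \<le> (\<Sum>a\<in>K. c^2)" by (rule sum_mono) (rule hdiff[OF _ a0])
  qed simp
  also have "\<dots> = card (lst K (Suc m)) * Suc m * c^2"
    unfolding cS by (simp add: algebra_simps)
  finally show ?case unfolding \<mu>_def .
qed



definition phi :: "real \<Rightarrow> nat \<Rightarrow> real" where "phi a k = max 0 (real k - a)"

definition Dcnt :: "clause list \<Rightarrow> nat \<Rightarrow> nat \<Rightarrow> nat" where
  "Dcnt cs v \<iota> = length (filter (\<lambda>c. fst (c ! \<iota>) = v) cs)"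

definition Xf :: "nat \<Rightarrow> nat \<Rightarrow> real \<Rightarrow> clause list \<Rightarrow> real" where
  "Xf r n a cs = (\<Sum>v<n. \<Sum>\<iota><r. phi a (Dcnt cs v \<iota>))"

definition PhiS :: "nat \<Rightarrow> nat \<Rightarrow> real \<Rightarrow> clause list \<Rightarrow> nat set \<Rightarrow> real" where
  "PhiS r n a cs S = (\<Sum>v<n. \<Sum>\<iota><r. phi a (deg cs S v \<iota>))"

lemma phi_nonneg: "phi a k \<ge> 0" unfolding phi_def by simp

lemma sum_le_plus1:
  fixes g h :: "'b \<Rightarrow> real"
  assumes "finite A" "x \<in> A" "\<And>y. y \<in> A \<Longrightarrow> g y \<le> h y" "g x + 1 \<le> h x"
  shows "sum g A + 1 \<le> sum h A"
proof -
  have "sum g (A - {x}) \<le> sum h (A - {x})" using assms(3) by (intro sum_mono) auto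
  then show ?thesis using sum.remove[OF assms(1,2), of g] sum.remove[OF assms(1,2), of h] assms(4) by linarith
qed

lemma deg_mono: "S' \<subseteq> S \<Longrightarrow> finite S \<Longrightarrow> deg cs S' v \<iota> \<le> deg cs S v \<iota>"
  unfolding deg_def by (rule card_mono) auto

lemma phi_mono: "k \<le> l \<Longrightarrow> phi a k \<le> phi a l" unfolding phi_def by auto

lemma removal_inv:
  assumes cs: "\<forall>c\<in>set cs. length c = r \<and> (\<forall>p\<in>set c. fst p < n)"
  and st: "(removal_step r a' cs)\<^sup>*\<^sup>* {0..<length cs} S"
  shows "S \<subseteq> {0..<length cs} \<and> real (length cs - card S) + PhiS r n (real_of_int a') cs S
           \<le> PhiS r n (real_of_int a') cs {0..<length cs}"
  using st
proof (induction rule: rtranclp_induct)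
  case base then show ?case by simp
next
  case (step S S')
  let ?a = "real_of_int a'"
  from step.hyps(2) obtain j \<iota>0 where j: "j \<in> S" "\<iota>0 < r"
    and dg: "int (deg cs S (fst (cs ! j ! \<iota>0)) \<iota>0) > a'" and S': "S' = S - {j}"
    unfolding removal_step_def by blast
  define v0 where "v0 = fst (cs ! j ! \<iota>0)"
  have Ssub: "S \<subseteq> {0..<length cs}" using step.IH by simp
  have fin: "finite S" using Ssub finite_subset by blast
  have jl: "j < length cs" using j Ssub by auto
  have "cs ! j \<in> set cs" using jl by simp
  then have "length (cs ! j) = r" "\<forall>p\<in>set (cs ! j). fst p < n" using cs by auto
  then have v0n: "v0 < n" unfolding v0_def using j(2) by auto
  have cardS: "card S' = card S - 1" "card S \<ge> 1" "card S \<le> length cs"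
    using S' j fin Ssub card_mono[OF _ Ssub] by (auto simp: card_gt_0_iff Suc_le_eq)
  have dS: "deg cs S' v0 \<iota>0 + 1 = deg cs S v0 \<iota>0"
  proof -
    have "{i\<in>S. fst (cs ! i ! \<iota>0) = v0} = insert j {i\<in>S'. fst (cs ! i ! \<iota>0) = v0}"
      using S' j v0_def by auto
    moreover have "j \<notin> {i\<in>S'. fst (cs ! i ! \<iota>0) = v0}" using S' by auto
    moreover have "finite {i\<in>S'. fst (cs ! i ! \<iota>0) = v0}" using S' fin by auto
    ultimately show ?thesis unfolding deg_def by simp
  qed
  have S'S: "S' \<subseteq> S" using S' by auto
  have inner: "(\<Sum>\<iota><r. phi ?a (deg cs S' v \<iota>)) \<le> (\<Sum>\<iota><r. phi ?a (deg cs S v \<iota>))" for v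
    by (intro sum_mono phi_mono deg_mono[OF S'S fin])
  have inner0: "(\<Sum>\<iota><r. phi ?a (deg cs S' v0 \<iota>)) + 1 \<le> (\<Sum>\<iota><r. phi ?a (deg cs S v0 \<iota>))"
  proof (rule sum_le_plus1)
    show "phi ?a (deg cs S' v0 \<iota>0) + 1 \<le> phi ?a (deg cs S v0 \<iota>0)"
      using dg dS unfolding phi_def v0_def[symmetric] by (auto simp: of_int_less_iff)
  qed (use j in \<open>auto intro: phi_mono deg_mono[OF S'S fin]\<close>)
  have "PhiS r n ?a cs S' + 1 \<le> PhiS r n ?a cs S"
    unfolding PhiS_def
    by (rule sum_le_plus1[where x=v0 and g="\<lambda>v. \<Sum>\<iota><r. phi ?a (deg cs S' v \<iota>)"
          and h="\<lambda>v. \<Sum>\<iota><r. phi ?a (deg cs S v \<iota>)", OF _ _ inner inner0]) (use v0n in auto)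
  moreover have "real (length cs - card S') = real (length cs - card S) + 1"
    using cardS by auto
  ultimately show ?case using step.IH S' Ssub by auto
qed

lemma deg_full: "deg cs {0..<length cs} v \<iota> = Dcnt cs v \<iota>"
  unfolding deg_def Dcnt_def length_filter_conv_card by (rule arg_cong[where f=card]) auto

lemma removal_bound:
  assumes cs: "\<forall>c\<in>set cs. length c = r \<and> (\<forall>p\<in>set c. fst p < n)"
  and "removal_outcome r a' cs S"
  shows "real (length cs - card S) \<le> Xf r n (real_of_int a') cs"
proof -
  have "real (length cs - card S) + PhiS r n (real_of_int a') cs S \<le> PhiS r n (real_of_int a') cs {0..<length cs}"
    using removal_inv[OF cs] assms(2) unfolding removal_outcome_def by blast
  moreover have "PhiS r n (real_of_int a') cs S \<ge> 0" unfolding PhiS_def by (intro sum_nonneg phi_nonneg)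
  moreover have "PhiS r n (real_of_int a') cs {0..<length cs} = Xf r n (real_of_int a') cs"
    unfolding PhiS_def Xf_def deg_full ..
  ultimately show ?thesis by linarith
qed



definition Vs :: "nat \<Rightarrow> (nat \<times> bool) set" where "Vs n = {0..<n} \<times> UNIV"
definition Kc :: "nat \<Rightarrow> nat \<Rightarrow> clause set" where "Kc r n = lst (Vs n) r"

lemma Vs_finite: "finite (Vs n)" unfolding Vs_def by simp
lemma Vs_card: "card (Vs n) = 2 * n" unfolding Vs_def by (simp add: card_cartesian_product)
lemma Kc_finite: "finite (Kc r n)" unfolding Kc_def by (rule lst_finite[OF Vs_finite])
lemma Kc_eq: "Kc r n = {c. length c = r \<and> (\<forall>p\<in>set c. fst p < n)}"
  unfolding Kc_def lst_def Vs_def by (auto simp: mem_Times_iff)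
lemma Kc_ne: "n > 0 \<Longrightarrow> Kc r n \<noteq> {}"
proof -
  assume "n > 0"
  then have "replicate r (0,True) \<in> Kc r n" unfolding Kc_eq by auto
  then show ?thesis by auto
qed
lemma csp_eq: "csp_instances r n m = lst (Kc r n) m"
  unfolding csp_instances_def lst_def Kc_eq by auto

lemma exp_filter:
  "exp (l * real (length (filter P cs))) = prod_list (map (\<lambda>c. if P c then exp l else 1) cs)"
  by (induction cs) (auto simp: distrib_left exp_add)

lemma sum_Vs:
  assumes "v < n"
  shows "(\<Sum>x\<in>Vs n. if fst x = v then e else (1::real)) = 2 * (real n - 1 + e)"
proof -
  have "(\<Sum>x\<in>Vs n. if fst x = v then e else (1::real)) = (\<Sum>i\<in>{0..<n}. \<Sum>b\<in>(UNIV::bool set). if i = v then e else 1)"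
    unfolding Vs_def sum.cartesian_product by (simp add: split_def)
  also have "\<dots> = (\<Sum>i\<in>{0..<n}. 2 * (1 + (if v = i then e - 1 else 0)))"
    by (rule sum.cong) (auto simp: UNIV_bool)
  also have "\<dots> = 2 * (real n + (e - 1))"
    using assms by (simp add: sum_distrib_left[symmetric] sum.distrib)
  finally show ?thesis by simp
qed

lemma sum_Kc:
  assumes "v < n" "\<iota> < r"
  shows "(\<Sum>c\<in>Kc r n. if fst (c ! \<iota>) = v then e else (1::real)) = real (card (Kc r n)) * (1 + (e - 1) / n)"
proof -
  have n: "n > 0" using assms by simp
  have "(\<Sum>c\<in>Kc r n. if fst (c ! \<iota>) = v then e else (1::real)) = real (2*n) ^ (r - 1) * (2 * (real n - 1 + e))"
    unfolding Kc_def using sum_lst_nth[OF Vs_finite assms(2), of "\<lambda>x. if fst x = v then e else 1"]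
    by (simp add: sum_Vs[OF assms(1)] Vs_card)
  also have "\<dots> = real (2*n) ^ (r - 1) * (2*n) * (1 + (e - 1) / n)"
    using n by (simp add: field_simps)
  also have "real (2*n) ^ (r - 1) * (2*n) = real (card (Kc r n))"
    unfolding Kc_def lst_card[OF Vs_finite] Vs_card using assms(2)
    by (simp add: power_Suc2[symmetric] del: of_nat_mult)
  finally show ?thesis .
qed

lemma phi_exp_bound:
  assumes "l > 0"
  shows "phi a k \<le> exp (l * real k) * (exp (- l * a - 1) / l)"
proof -
  have "l * (real k - a) \<le> exp (l * (real k - a) - 1)"
    using exp_ge_add_one_self[of "l * (real k - a) - 1"] by simp
  then have "real k - a \<le> exp (l * (real k - a) - 1) / l" using assms by (simp add: field_simps)
  moreover have "0 \<le> exp (l * (real k - a) - 1) / l" using assms by simp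
  moreover have "exp (l * (real k - a) - 1) = exp (l * real k) * exp (- l * a - 1)"
    by (simp add: exp_add[symmetric] algebra_simps)
  ultimately show ?thesis unfolding phi_def by auto
qed

lemma pair_bound:
  assumes "v < n" "\<iota> < r" "l > 0"
  shows "(\<Sum>cs\<in>lst (Kc r n) m. phi a (Dcnt cs v \<iota>))
     \<le> card (lst (Kc r n) m) * (exp (- l * a - 1) / l * exp ((exp l - 1) * m / n))"
proof -
  let ?g = "\<lambda>c::clause. if fst (c ! \<iota>) = v then exp l else 1"
  let ?M = "exp (- l * a - 1) / l"
  have "(\<Sum>cs\<in>lst (Kc r n) m. phi a (Dcnt cs v \<iota>)) \<le> (\<Sum>cs\<in>lst (Kc r n) m. exp (l * real (Dcnt cs v \<iota>)) * ?M)"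
    by (rule sum_mono) (rule phi_exp_bound[OF assms(3)])
  also have "\<dots> = (\<Sum>cs\<in>lst (Kc r n) m. prod_list (map ?g cs)) * ?M"
    unfolding Dcnt_def exp_filter sum_distrib_right ..
  also have "\<dots> = (real (card (Kc r n)) * (1 + (exp l - 1) / n)) ^ m * ?M"
    unfolding sum_lst_prod[OF Kc_finite] sum_Kc[OF assms(1,2)] ..
  also have "\<dots> \<le> (real (card (Kc r n)) * exp ((exp l - 1) / n)) ^ m * ?M"
  proof -
    have "0 \<le> 1 + (exp l - 1) / n" using assms by simp
    then have "(real (card (Kc r n)) * (1 + (exp l - 1) / n)) ^ m \<le> (real (card (Kc r n)) * exp ((exp l - 1) / n)) ^ m"
      by (intro power_mono mult_left_mono exp_ge_add_one_self) auto
    then show ?thesis using assms(3) by (intro mult_right_mono) auto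
  qed
  also have "\<dots> = card (lst (Kc r n) m) * (?M * exp ((exp l - 1) * m / n))"
    unfolding lst_card[OF Kc_finite] power_mult_distrib exp_of_nat_mult[symmetric]
    by (simp add: field_simps)
  finally show ?thesis .
qed

lemma phi_lip: "\<bar>phi a k - phi a l\<bar> \<le> \<bar>real k - real l\<bar>"
  unfolding phi_def by auto

lemma Dcnt_app: "Dcnt (xs @ c # ys) v \<iota> = Dcnt xs v \<iota> + (if fst (c ! \<iota>) = v then 1 else 0) + Dcnt ys v \<iota>"
  unfolding Dcnt_def by simp

lemma Xf_bd:
  "\<bar>Xf r n A (xs @ a # ys) - Xf r n A (xs @ b # ys)\<bar> \<le> 2 * real r"
proof -
  let ?I = "\<lambda>c v \<iota>. (if fst (c ! \<iota>) = v then 1 else 0::real)"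
  have "\<bar>Xf r n A (xs @ a # ys) - Xf r n A (xs @ b # ys)\<bar>
      = \<bar>\<Sum>v<n. \<Sum>\<iota><r. phi A (Dcnt (xs @ a # ys) v \<iota>) - phi A (Dcnt (xs @ b # ys) v \<iota>)\<bar>"
    unfolding Xf_def by (simp add: sum_subtractf)
  also have "\<dots> \<le> (\<Sum>v<n. \<bar>\<Sum>\<iota><r. phi A (Dcnt (xs @ a # ys) v \<iota>) - phi A (Dcnt (xs @ b # ys) v \<iota>)\<bar>)"
    by (rule sum_abs)
  also have "\<dots> \<le> (\<Sum>v<n. \<Sum>\<iota><r. ?I a v \<iota> + ?I b v \<iota>)"
  proof (rule sum_mono)
    fix v
    have "\<bar>\<Sum>\<iota><r. phi A (Dcnt (xs @ a # ys) v \<iota>) - phi A (Dcnt (xs @ b # ys) v \<iota>)\<bar>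
       \<le> (\<Sum>\<iota><r. \<bar>phi A (Dcnt (xs @ a # ys) v \<iota>) - phi A (Dcnt (xs @ b # ys) v \<iota>)\<bar>)" by (rule sum_abs)
    also have "\<dots> \<le> (\<Sum>\<iota><r. ?I a v \<iota> + ?I b v \<iota>)"
    proof (rule sum_mono)
      fix \<iota>
      show "\<bar>phi A (Dcnt (xs @ a # ys) v \<iota>) - phi A (Dcnt (xs @ b # ys) v \<iota>)\<bar> \<le> ?I a v \<iota> + ?I b v \<iota>"
        using phi_lip[of A "Dcnt (xs @ a # ys) v \<iota>" "Dcnt (xs @ b # ys) v \<iota>"]
        unfolding Dcnt_app by auto
    qed
    finally show "\<bar>\<Sum>\<iota><r. phi A (Dcnt (xs @ a # ys) v \<iota>) - phi A (Dcnt (xs @ b # ys) v \<iota>)\<bar> \<le> (\<Sum>\<iota><r. ?I a v \<iota> + ?I b v \<iota>)" .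
  qed
  also have "\<dots> = (\<Sum>\<iota><r. (\<Sum>v<n. ?I a v \<iota>) + (\<Sum>v<n. ?I b v \<iota>))"
    by (subst sum.swap) (simp add: sum.distrib)
  also have "\<dots> \<le> (\<Sum>\<iota><r. 2)"
  proof (rule sum_mono)
    fix \<iota>
    have "(\<Sum>v<n. ?I c v \<iota>) \<le> 1" for c
      using sum.delta[of "{..<n}" "fst (c ! \<iota>)" "\<lambda>_. 1::real"] by (simp add: eq_commute)
    from this[of a] this[of b] show "(\<Sum>v<n. ?I a v \<iota>) + (\<Sum>v<n. ?I b v \<iota>) \<le> 2" by simp
  qed
  also have "\<dots> = 2 * real r" by simp
  finally show ?thesis .
qed



lemma analytic:
  fixes r :: nat and \<alpha> a q :: real
  assumes r: "r \<ge> 1" and al: "\<alpha> > 0" and dl: "exp (4 * real r) \<le> real r * \<alpha>"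
  and a: "a \<ge> \<alpha> + sqrt (real r * \<alpha>) * ln (real r * \<alpha>) / real r"
  and q: "0 \<le> q" "q \<le> \<alpha>"
  defines "l \<equiv> ln (real r * \<alpha>) / (2 * sqrt (real r * \<alpha>))"
  shows "exp (- l * a - 1) / l * exp ((exp l - 1) * q) \<le> 2 * exp (- ((ln (real r * \<alpha>))^2) / (8 * real r))"
proof -
  define d where "d = real r * \<alpha>"
  define L where "L = ln d"
  define sd where "sd = sqrt d"
  have rp: "real r > 0" using r by simp
  have dpos: "d > 0" unfolding d_def using rp al by simp
  have L4: "L \<ge> 4 * real r"
  proof -
    have "4 * real r = ln (exp (4 * real r))" by simp
    also have "\<dots> \<le> L" unfolding L_def d_def using dl dpos[unfolded d_def] by (subst ln_le_cancel_iff) auto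
    finally show ?thesis .
  qed
  have Lpos: "L > 0" using L4 rp by simp
  have L1: "L \<ge> 1" using L4 r by simp
  have sdexp: "sd = exp (L / 2)" unfolding sd_def L_def
    using dpos by (simp add: powr_half_sqrt[symmetric] powr_def)
  have sdpos: "sd > 0" unfolding sdexp by simp
  have sd2: "sd * sd = d" unfolding sd_def using dpos by simp
  have ld: "l = L / (2 * sd)" unfolding l_def L_def sd_def d_def ..
  have lpos: "l > 0" unfolding ld using Lpos sdpos by simp
  have "L / 2 \<le> exp (L / 2)" using exp_ge_add_one_self[of "L/2"] by linarith
  then have "L \<le> exp (L / 2) * 2" by linarith
  then have l1: "l \<le> 1" unfolding ld sdexp by (simp add: field_simps)
  have E1: "exp l - 1 \<le> l + l^2" using exp_bound[of l] lpos l1 by simp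
  have E0: "exp l - 1 \<ge> 0" using lpos by simp
  have E2: "(exp l - 1) * q \<le> (l + l^2) * \<alpha>"
    using mult_mono[OF E1 q(2) _ q(1)] E0 by simp
  have al_eq: "\<alpha> = d / real r" unfolding d_def using rp by simp
  have a': "a \<ge> \<alpha> + sd * L / real r" using a unfolding sd_def L_def d_def .
  have E3: "- l * a \<le> - l * (\<alpha> + sd * L / real r)" using a' lpos by simp
  have c1: "l^2 * \<alpha> = L^2 / (4 * real r)"
    unfolding ld al_eq power2_eq_square using sdpos rp sd2[symmetric] by (simp add: field_simps)
  have c2: "l * (sd * L / real r) = L^2 / (2 * real r)"
    unfolding ld power2_eq_square using sdpos rp by (simp add: field_simps)
  have "- l * a - 1 + (exp l - 1) * q \<le> - l * (\<alpha> + sd * L / real r) - 1 + (l + l^2) * \<alpha>"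
    using E2 E3 by linarith
  also have "\<dots> = l^2 * \<alpha> - l * (sd * L / real r) - 1" by (simp add: algebra_simps)
  also have "\<dots> = - (L^2) / (4 * real r) - 1" unfolding c1 c2 using rp by (simp add: field_simps)
  finally have ex: "- l * a - 1 + (exp l - 1) * q \<le> - (L^2) / (4 * real r) - 1" .
  have "exp (- l * a - 1) / l * exp ((exp l - 1) * q) = exp (- l * a - 1 + (exp l - 1) * q) / l"
    by (simp add: exp_add)
  also have "\<dots> \<le> exp (- (L^2) / (4 * real r) - 1) / l"
    using ex lpos by (simp add: divide_right_mono)
  also have "\<dots> = 2 * (exp (- (L^2) / (8 * real r)) * (exp (- (L^2) / (8 * real r) - 1) * sd / L))"
  proof -
    have "exp (- (L^2) / (4 * real r) - 1) = exp (- (L^2) / (8 * real r)) * exp (- (L^2) / (8 * real r) - 1)"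
      by (simp add: exp_add[symmetric] field_simps)
    then show ?thesis unfolding ld using Lpos sdpos by (simp add: field_simps)
  qed
  also have "\<dots> \<le> 2 * (exp (- (L^2) / (8 * real r)) * 1)"
  proof -
    have "L^2 / (8 * real r) \<ge> L / 2"
    proof -
      have "L * L \<ge> L * (4 * real r)" using L4 Lpos by (simp add: mult_left_mono)
      then show ?thesis using rp by (simp add: field_simps power2_eq_square)
    qed
    then have "exp (- (L^2) / (8 * real r) - 1) * sd = exp (- (L^2) / (8 * real r) - 1 + L / 2)"
      unfolding sdexp by (simp add: exp_add)
    also have "\<dots> \<le> exp 0" using \<open>L^2 / (8 * real r) \<ge> L / 2\<close> by simp
    also have "\<dots> \<le> L" using L1 by simp
    finally have "exp (- (L^2) / (8 * real r) - 1) * sd / L \<le> 1" using Lpos by simp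
    then show ?thesis by (intro mult_left_mono) auto
  qed
  finally show ?thesis unfolding L_def d_def by simp
qed



lemma main_fixed:
  fixes r :: nat and \<alpha> :: real
  assumes r: "r \<ge> 2" and al: "\<alpha> > 0" and dl: "exp (4 * real r) \<le> real r * \<alpha>"
  shows "(\<lambda>n. measure_pmf.prob (random_csp r n \<alpha>)
        {cs. \<forall>S. removal_outcome r (alpha' r \<alpha>) cs S \<longrightarrow>
              real (length cs - card S) \<le> (2 * real r + 1) * real n * (real r * \<alpha>) powr (- (1 / (8 * real r)) * ln (real r * \<alpha>))})
    \<longlonglongrightarrow> 1"
proof -
  define d where "d = real r * \<alpha>"
  define L where "L = ln d"
  define g where "g = exp (- (L^2) / (8 * real r))"
  define a where "a = real_of_int (alpha' r \<alpha>)"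
  define l where "l = ln (real r * \<alpha>) / (2 * sqrt (real r * \<alpha>))"
  define E where "E n = {cs. \<forall>S. removal_outcome r (alpha' r \<alpha>) cs S \<longrightarrow>
              real (length cs - card S) \<le> (2 * real r + 1) * real n * (real r * \<alpha>) powr (- (1 / (8 * real r)) * ln (real r * \<alpha>))}" for n
  define B where "B = 4 * real r ^ 2 * \<alpha> / g^2"
  have rp: "real r > 0" using r by simp
  have dpos: "d > 0" unfolding d_def using rp al by simp
  have gpos: "g > 0" unfolding g_def by simp
  have d1: "d > 1" using dl rp unfolding d_def
    by (smt (verit) exp_gt_one mult_pos_pos)
  have Lpos: "L > 0" unfolding L_def using d1 by simp
  have powr_eq: "(real r * \<alpha>) powr (- (1 / (8 * real r)) * ln (real r * \<alpha>)) = g"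
    unfolding g_def L_def d_def[symmetric] using dpos by (simp add: powr_def power2_eq_square)
  have a_ge: "a \<ge> \<alpha> + sqrt (real r * \<alpha>) * ln (real r * \<alpha>) / real r"
  proof -
    have "a \<ge> (d + sqrt d * ln d) / real r"
      unfolding a_def alpha'_def d_def Let_def by linarith
    also have "(d + sqrt d * ln d) / real r = \<alpha> + sqrt (real r * \<alpha>) * ln (real r * \<alpha>) / real r"
      unfolding d_def using rp by (simp add: field_simps)
    finally show ?thesis .
  qed
  have lpos: "l > 0" unfolding l_def using Lpos dpos unfolding L_def d_def by simp
  have lower: "1 - B * inverse (real n) \<le> measure_pmf.prob (random_csp r n \<alpha>) (E n)" if n: "n \<ge> 1" for n
  proof -
    define m where "m = nat \<lfloor>\<alpha> * real n\<rfloor>"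
    define A where "A = lst (Kc r n) m"
    define X where "X = Xf r n a"
    have np: "real n > 0" using n by simp
    have mle: "real m \<le> \<alpha> * real n" unfolding m_def using al np by simp
    have Kfin: "finite (Kc r n)" by (rule Kc_finite)
    have Kne: "Kc r n \<noteq> {}" using Kc_ne n by simp
    have Afin: "finite A" unfolding A_def by (rule lst_finite[OF Kfin])
    have cardA: "card A > 0" unfolding A_def lst_card[OF Kfin] using Kfin Kne by (simp add: card_gt_0_iff)
    have Ane: "A \<noteq> {}" using cardA by auto
    define \<mu> where "\<mu> = (\<Sum>cs\<in>A. X cs) / card A"
    define P where "P = exp (- l * a - 1) / l * exp ((exp l - 1) * real m / real n)"
    have P2: "P \<le> 2 * g"
    proof -
      have "P = exp (- l * a - 1) / l * exp ((exp l - 1) * (real m / real n))" unfolding P_def by simp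
      also have "\<dots> \<le> 2 * exp (- ((ln (real r * \<alpha>))^2) / (8 * real r))"
        unfolding l_def
        by (rule analytic[OF _ al dl a_ge]) (use r mle np in \<open>simp_all add: pos_divide_le_eq[OF np]\<close>)
      finally show ?thesis unfolding g_def L_def d_def .
    qed
    have sumX: "(\<Sum>cs\<in>A. X cs) \<le> card A * (real n * real r * (2 * g))"
    proof -
      have "(\<Sum>cs\<in>A. X cs) = (\<Sum>v<n. \<Sum>\<iota><r. \<Sum>cs\<in>A. phi a (Dcnt cs v \<iota>))"
        unfolding X_def Xf_def by (subst sum.swap, subst (2) sum.swap) simp
      also have "\<dots> \<le> (\<Sum>v<n. \<Sum>\<iota><r. card A * P)"
        unfolding A_def P_def by (intro sum_mono pair_bound lpos) auto
      also have "\<dots> = card A * (real n * real r * P)" by simp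
      also have "\<dots> \<le> card A * (real n * real r * (2 * g))"
        using P2 np rp by (intro mult_left_mono) auto
      finally show ?thesis .
    qed
    have \<mu>le: "\<mu> \<le> 2 * real r * real n * g"
    proof -
      have h: "(\<Sum>cs\<in>A. X cs) \<le> (real n * real r * (2 * g)) * card A" using sumX by (simp only: mult.commute)
      have "\<mu> \<le> real n * real r * (2 * g)" unfolding \<mu>_def using h cardA by (simp add: pos_divide_le_eq)
      then show ?thesis by (simp add: algebra_simps)
    qed
    have var: "(\<Sum>cs\<in>A. (X cs - \<mu>)^2) \<le> card A * m * (2 * real r)^2"
      unfolding \<mu>_def A_def X_def
      by (rule var_bound[OF Kfin Kne]) (rule Xf_bd)
    define Bad where "Bad = {cs\<in>A. X cs > \<mu> + real n * g}"
    have "card Bad * (real n * g)^2 = (\<Sum>cs\<in>Bad. (real n * g)^2)" by simp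
    also have "\<dots> \<le> (\<Sum>cs\<in>Bad. (X cs - \<mu>)^2)"
    proof (rule sum_mono)
      fix cs assume "cs \<in> Bad"
      then have "real n * g \<le> X cs - \<mu>" unfolding Bad_def by auto
      then show "(real n * g)^2 \<le> (X cs - \<mu>)^2" using np gpos by (intro power_mono) auto
    qed
    also have "\<dots> \<le> (\<Sum>cs\<in>A. (X cs - \<mu>)^2)"
      by (rule sum_mono2[OF Afin]) (auto simp: Bad_def)
    also have "\<dots> \<le> card A * (\<alpha> * real n) * (2 * real r)^2"
    proof -
      have "real (card A) * real m \<le> real (card A) * (\<alpha> * real n)" using mle by (intro mult_left_mono) auto
      then have "real (card A) * real m * (2 * real r)^2 \<le> real (card A) * (\<alpha> * real n) * (2 * real r)^2"
        by (intro mult_right_mono) auto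
      moreover have "(\<Sum>cs\<in>A. (X cs - \<mu>)^2) \<le> real (card A) * real m * (2 * real r)^2" using var by simp
      ultimately show ?thesis by linarith
    qed
    finally have badc: "card Bad * (real n * g)^2 \<le> card A * (\<alpha> * real n) * (2 * real r)^2" .
    have badfrac: "card Bad / card A \<le> B * inverse (real n)"
    proof -
      have "card Bad * (real n * g)^2 / (card A * (real n * g)^2) \<le> card A * (\<alpha> * real n) * (2 * real r)^2 / (card A * (real n * g)^2)"
        using badc np gpos cardA by (intro divide_right_mono) auto
      moreover have "card Bad * (real n * g)^2 / (card A * (real n * g)^2) = card Bad / card A"
        using np gpos by simp
      moreover have "card A * (\<alpha> * real n) * (2 * real r)^2 / (card A * (real n * g)^2) = B * inverse (real n)"
        unfolding B_def using np gpos cardA by (simp add: field_simps power2_eq_square)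
      ultimately show ?thesis by simp
    qed
    have sub: "A - Bad \<subseteq> A \<inter> E n"
    proof
      fix cs assume cs: "cs \<in> A - Bad"
      then have Xle: "X cs \<le> \<mu> + real n * g" unfolding Bad_def by auto
      have cl: "\<forall>c\<in>set cs. length c = r \<and> (\<forall>p\<in>set c. fst p < n)"
        using cs unfolding A_def lst_def Kc_eq by auto
      have "cs \<in> E n" unfolding E_def powr_eq
      proof (intro CollectI allI impI)
        fix S assume "removal_outcome r (alpha' r \<alpha>) cs S"
        from removal_bound[OF cl this] have "real (length cs - card S) \<le> X cs" unfolding X_def a_def .
        also have "\<dots> \<le> (2 * real r + 1) * real n * g" using Xle \<mu>le by (simp add: algebra_simps)
        finally show "real (length cs - card S) \<le> (2 * real r + 1) * real n * g" .
      qed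
      then show "cs \<in> A \<inter> E n" using cs by auto
    qed
    have "measure_pmf.prob (random_csp r n \<alpha>) (E n) = card (A \<inter> E n) / card A"
      unfolding random_csp_def csp_eq A_def m_def[symmetric] using measure_pmf_of_set[OF Ane[unfolded A_def] Afin[unfolded A_def]]
      by simp
    also have "\<dots> \<ge> card (A - Bad) / card A"
      using card_mono[OF _ sub] Afin cardA by (intro divide_right_mono) auto
    moreover have cB: "card (A - Bad) = card A - card Bad" "card Bad \<le> card A"
      using Afin by (auto simp: Bad_def card_Diff_subset card_mono)
    ultimately have "measure_pmf.prob (random_csp r n \<alpha>) (E n) \<ge> (card A - card Bad) / card A"
      by (simp add: of_nat_diff)
    also have "(card A - card Bad) / card A = 1 - card Bad / card A"
      using cardA cB(2) by (simp add: field_simps of_nat_diff)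
    finally show ?thesis using badfrac by linarith
  qed
  have "(\<lambda>n. measure_pmf.prob (random_csp r n \<alpha>) (E n)) \<longlonglongrightarrow> 1"
  proof (rule tendsto_sandwich)
    show "\<forall>\<^sub>F n in sequentially. 1 - B * inverse (real n) \<le> measure_pmf.prob (random_csp r n \<alpha>) (E n)"
      by (rule eventually_mono[OF eventually_ge_at_top[of "1::nat"]]) (rule lower)
    show "\<forall>\<^sub>F n in sequentially. measure_pmf.prob (random_csp r n \<alpha>) (E n) \<le> 1"
      by (simp add: measure_pmf.prob_le_1)
    have "(\<lambda>n. B * inverse (real n)) \<longlonglongrightarrow> 0"
      by (intro tendsto_mult_right_zero lim_inverse_n)
    then show "(\<lambda>n. 1 - B * inverse (real n)) \<longlonglongrightarrow> 1"
      using tendsto_diff[OF tendsto_const[of 1]] by fastforce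
  qed simp
  then show ?thesis unfolding E_def .
qed


theorem mainTheorem19:
  fixes r :: nat and f :: "int list \<Rightarrow> nat"
  assumes "r \<ge> 2" and "\<forall>x. f x \<in> {0, 1}"
  shows "\<exists>c>0. \<exists>C>0. \<exists>d0. \<forall>\<alpha>>0. real r * \<alpha> \<ge> d0 \<longrightarrow>
    (\<lambda>n. measure_pmf.prob (random_csp r n \<alpha>)
        {cs. \<forall>S. removal_outcome r (alpha' r \<alpha>) cs S \<longrightarrow>
              real (length cs - card S) \<le> C * real n * (real r * \<alpha>) powr (- c * ln (real r * \<alpha>))})
    \<longlonglongrightarrow> 1"
proof -
  have c0: "0 < 1 / (8 * real r)" using assms(1) by simp
  have C0: "0 < 2 * real r + 1" by simp
  have H: "\<forall>\<alpha>>0. exp (4 * real r) \<le> real r * \<alpha> \<longrightarrow> (\<lambda>n. measure_pmf.prob (random_csp r n \<alpha>)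
        {cs. \<forall>S. removal_outcome r (alpha' r \<alpha>) cs S \<longrightarrow>
              real (length cs - card S) \<le> (2 * real r + 1) * real n * (real r * \<alpha>) powr (- (1 / (8 * real r)) * ln (real r * \<alpha>))})
    \<longlonglongrightarrow> 1" using main_fixed[OF assms(1)] by blast
  show ?thesis using c0 C0 H by blast
qed

end
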